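(* For every real $r>1$, the number $C_r$ of connected components of $\overline{\sigma_{-r}(\mathbb{N})}$ satisfies $C_r\ge 2^{\pi(r-1)}$, where $\pi(x)$ denotes the number of primes at most $x$.
   Context: For real $r>1$, $\sigma_{-r}(n)=\sum_{d\mid n}d^{-r}$ for $n\in\mathbb{N}$, and $\overline{\sigma_{-r}(\mathbb{N})}$ is the closure in $\mathbb{R}$ of its image. $C_r$ is the number of connected components of this closure. *)

theory Defs
  imports "HOL-Analysis.Analysis" "HOL-Computational_Algebra.Primes"
begin

definition sigma_neg :: "real \<Rightarrow> nat \<Rightarrow> real" where
  "sigma_neg r n = (\<Sum>d \<in> {d. d dvd n}. real d powr (- r))"

definition sigma_closure :: "real \<Rightarrow> real set" where
  "sigma_closure r = closure (sigma_neg r ` {1..})"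

definition prime_pi :: "real \<Rightarrow> nat" where
  "prime_pi x = card {p :: nat. prime p \<and> real p \<le> x}"

end

theory Submission
  imports Defs
begin

lemma exp_gt_lin: "(y::real) > 0 \<Longrightarrow> 1 + y < exp y"
proof -
  assume y: "y > 0"
  have "1 + y/2 \<le> exp (y/2)" by simp
  hence "(1 + y/2)^2 \<le> exp (y/2) ^ 2" using y by (intro power_mono) auto
  also have "exp (y/2) ^ 2 = exp y" by (simp add: power2_eq_square flip: exp_add)
  finally have "(1 + y/2)^2 \<le> exp y" .
  moreover have "(1 + y/2)^2 = 1 + y + y^2/4" by (simp add: power2_eq_square field_simps)
  moreover have "y^2 > 0" using y by simp
  ultimately show ?thesis by linarith
qed
lemma step_strict:
  fixes r a :: real
  assumes r: "r > 1" and a: "a > 0"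
  shows "(a+1) powr (-r) < (a powr (1-r) - (a+1) powr (1-r)) / (r-1)"
proof -
  define s where "s = r - 1"
  have s: "s > 0" using r s_def by simp
  define L where "L = ln ((a+1)/a)"
  have "ln (a/(a+1)) \<le> a/(a+1) - 1"
    using a by (intro ln_le_minus_one) simp
  also have "a/(a+1) - 1 = - (1/(a+1))" using a by (simp add: field_simps)
  finally have L: "L \<ge> 1/(a+1)" unfolding L_def using a by (simp add: ln_div)
  have Lp: "L > 0" using L a by (metis divide_pos_pos less_le_trans zero_less_one add_pos_pos)
  define E where "E = ((a+1)/a) powr s"
  have E: "E = exp (s * L)" unfolding E_def L_def powr_def using a by simp
  have "E > 1 + s * L" unfolding E using s Lp by (intro exp_gt_lin) simp
  moreover have "s * L \<ge> s / (a+1)" using L s by (simp add: divide_simps mult_left_mono)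
  ultimately have E1: "E - 1 > s / (a+1)" by simp
  have eq: "a powr (1-r) = (a+1) powr (1-r) * E"
  proof -
    have h: "1 - r = - s" unfolding s_def by simp
    have E': "E = (a+1) powr s / a powr s" unfolding E_def using a by (simp add: powr_divide)
    have "(a+1) powr s > 0" using a by auto
    thus ?thesis unfolding h E' powr_minus_divide by simp
  qed
  have eq2: "(a+1) powr (-r) = (a+1) powr (1-r) / (a+1)"
    using a by (simp add: powr_diff powr_minus_divide)
  have P: "(a+1) powr (1-r) > 0" using a by simp
  have "a powr (1-r) - (a+1) powr (1-r) = (a+1) powr (1-r) * (E - 1)"
    using eq by (simp add: algebra_simps)
  also have "\<dots> > (a+1) powr (1-r) * (s/(a+1))" using E1 P by (intro mult_strict_left_mono) auto
  finally have "a powr (1-r) - (a+1) powr (1-r) > s * (a+1) powr (-r)"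
    using eq2 by (simp add: mult.commute)
  thus ?thesis using s unfolding s_def by (simp add: field_simps)
qed


definition gg :: "real \<Rightarrow> nat \<Rightarrow> real" where
  "gg r k = real k powr (1-r) / (r-1)"

lemma tail_interval:
  assumes r: "r > 1" and k: "k \<ge> 1" and M: "M \<ge> k"
  shows "(\<Sum>j\<in>{k+1..M}. real j powr (-r)) \<le> gg r k - gg r M"
  using M
proof (induction M rule: dec_induct)
  case base
  then show ?case by simp
next
  case (step M)
  have "real M > 0" using step k by simp
  from step_strict[OF r this]
  have s: "real (Suc M) powr (-r) < gg r M - gg r (Suc M)"
    unfolding gg_def by (simp add: diff_divide_distrib add.commute)
  have "{k+1..Suc M} = insert (Suc M) {k+1..M}" using step by auto
  hence "(\<Sum>j\<in>{k+1..Suc M}. real j powr (-r)) = real (Suc M) powr (-r) + (\<Sum>j\<in>{k+1..M}. real j powr (-r))"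
    by simp
  then show ?case using step s by linarith
qed

lemma tail:
  assumes r: "r > 1" and k: "k \<ge> 1" and F: "finite F" "F \<subseteq> {k+1..}"
  shows "(\<Sum>j\<in>F. real j powr (-r)) \<le> gg r k"
proof -
  define M where "M = max k (Max (insert k F))"
  have sub: "F \<subseteq> {k+1..M}" using F unfolding M_def by (auto simp: Max_ge_iff)
  have "(\<Sum>j\<in>F. real j powr (-r)) \<le> (\<Sum>j\<in>{k+1..M}. real j powr (-r))"
    by (rule sum_mono2[OF _ sub]) auto
  also have "\<dots> \<le> gg r k - gg r M" using tail_interval[OF r k] M_def by simp
  also have "\<dots> \<le> gg r k" using r unfolding gg_def by simp
  finally show ?thesis .
qed

lemma tail2:
  assumes r: "r > 1" and k: "k \<ge> 1" and F: "finite F" "F \<subseteq> {k..}"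
  shows "(\<Sum>j\<in>F. real j powr (-r)) \<le> real k powr (-r) + gg r k"
proof -
  have "(\<Sum>j\<in>F. real j powr (-r)) \<le> (\<Sum>j\<in>insert k F. real j powr (-r))"
    by (rule sum_mono2) (use F in auto)
  also have "\<dots> = real k powr (-r) + (\<Sum>j\<in>F - {k}. real j powr (-r))"
    using F by (simp add: sum.insert_remove)
  also have "(\<Sum>j\<in>F - {k}. real j powr (-r)) \<le> gg r k"
    by (rule tail[OF r k]) (use F in auto)
  finally show ?thesis by simp
qed

definition dl :: "real \<Rightarrow> nat \<Rightarrow> real" where
  "dl r m = real m powr (-r) - real (m+1) powr (-r) - gg r (m+1)"

lemma dl_pos:
  assumes r: "r > 1" and m: "m \<ge> 1" "real m \<le> r - 1"
  shows "dl r m > 0"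
proof -
  have mp: "real m > 0" using m by simp
  have "gg r m = real m powr (-r) * (real m / (r - 1))"
    unfolding gg_def using mp by (simp add: powr_diff powr_minus_divide field_simps)
  also have "\<dots> \<le> real m powr (-r)"
    using m r by (intro mult_left_le) auto
  finally have a: "gg r m \<le> real m powr (-r)" .
  from step_strict[OF r mp]
  have "real (m+1) powr (-r) < gg r m - gg r (m+1)"
    unfolding gg_def by (simp add: diff_divide_distrib add.commute)
  thus ?thesis using a unfolding dl_def by linarith
qed

lemma sep_dir:
  assumes r: "r > 1" and n: "n \<ge> 1" "n' \<ge> 1" and m: "m \<ge> 1"
    and dv: "m dvd n" "\<not> m dvd n'" and lt: "\<And>j. j < m \<Longrightarrow> (j dvd n \<longleftrightarrow> j dvd n')"
  shows "sigma_neg r n - sigma_neg r n' \<ge> dl r m"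
proof -
  define D where "D = {d. d dvd n}"
  define D' where "D' = {d. d dvd n'}"
  have fD: "finite D" using n unfolding D_def by (simp add: finite_divisors_nat)
  have fD': "finite D'" using n unfolding D'_def by (simp add: finite_divisors_nat)
  have eqlt: "{d\<in>D. d<m} = {d\<in>D'. d<m}" using lt unfolding D_def D'_def by auto
  have s1: "sigma_neg r n = (\<Sum>d\<in>{d\<in>D. d<m}. real d powr (-r)) + (\<Sum>d\<in>{d\<in>D. m \<le> d}. real d powr (-r))"
  proof -
    have "D = {d\<in>D. d<m} \<union> {d\<in>D. m \<le> d}" by auto
    hence "sigma_neg r n = (\<Sum>d\<in>{d\<in>D. d<m} \<union> {d\<in>D. m \<le> d}. real d powr (-r))"
      unfolding sigma_neg_def D_def[symmetric] by simp
    also have "\<dots> = (\<Sum>d\<in>{d\<in>D. d<m}. real d powr (-r)) + (\<Sum>d\<in>{d\<in>D. m \<le> d}. real d powr (-r))" by (rule sum.union_disjoint) (use fD in auto)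
    finally show ?thesis .
  qed
  have s2: "sigma_neg r n' = (\<Sum>d\<in>{d\<in>D'. d<m}. real d powr (-r)) + (\<Sum>d\<in>{d\<in>D'. m < d}. real d powr (-r))"
  proof -
    have "m \<notin> D'" using dv unfolding D'_def by simp
    hence "D' = {d\<in>D'. d<m} \<union> {d\<in>D'. m < d}" by (auto simp: not_less le_less)
    hence "sigma_neg r n' = (\<Sum>d\<in>{d\<in>D'. d<m} \<union> {d\<in>D'. m < d}. real d powr (-r))"
      unfolding sigma_neg_def D'_def[symmetric] by simp
    also have "\<dots> = (\<Sum>d\<in>{d\<in>D'. d<m}. real d powr (-r)) + (\<Sum>d\<in>{d\<in>D'. m < d}. real d powr (-r))" by (rule sum.union_disjoint) (use fD' in auto)
    finally show ?thesis .
  qed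
  have g1: "(\<Sum>d\<in>{d\<in>D. m \<le> d}. real d powr (-r)) \<ge> real m powr (-r)"
    by (rule member_le_sum) (use fD dv in \<open>auto simp: D_def\<close>)
  have g2: "(\<Sum>d\<in>{d\<in>D'. m < d}. real d powr (-r)) \<le> real (m+1) powr (-r) + gg r (m+1)"
    by (rule tail2[OF r]) (use fD' in auto)
  show ?thesis using s1 s2 g1 g2 unfolding dl_def eqlt by linarith
qed

definition NN :: "real \<Rightarrow> nat" where "NN r = nat \<lfloor>r - 1\<rfloor>"
definition cls :: "real \<Rightarrow> nat \<Rightarrow> nat set" where "cls r n = {j\<in>{1..NN r}. j dvd n}"
definition dmin :: "real \<Rightarrow> real" where "dmin r = Min (insert 1 (dl r ` {1..NN r}))"

lemma NN_le: "r > 1 \<Longrightarrow> m \<le> NN r \<Longrightarrow> real m \<le> r - 1"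
proof -
  assume r: "r > 1" and m: "m \<le> NN r"
  have "real m \<le> real (nat \<lfloor>r - 1\<rfloor>)" using m unfolding NN_def by simp
  also have "\<dots> = of_int \<lfloor>r - 1\<rfloor>" using r by simp
  also have "\<dots> \<le> r - 1" by simp
  finally show ?thesis .
qed

lemma le_NN: "real p \<le> r - 1 \<Longrightarrow> p \<le> NN r"
  unfolding NN_def by (rule le_nat_floor)

lemma dmin_pos: "r > 1 \<Longrightarrow> dmin r > 0"
  unfolding dmin_def using dl_pos NN_le by (auto simp: Min_gr_iff)

lemma dmin_le: "m \<in> {1..NN r} \<Longrightarrow> dmin r \<le> dl r m"
  unfolding dmin_def by (intro Min_le) auto

lemma sep:
  assumes r: "r > 1" and n: "n \<ge> 1" "n' \<ge> 1" and c: "cls r n \<noteq> cls r n'"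
  shows "\<bar>sigma_neg r n - sigma_neg r n'\<bar> \<ge> dmin r"
proof -
  define S where "S = (cls r n - cls r n') \<union> (cls r n' - cls r n)"
  have fS: "finite S" unfolding S_def cls_def by auto
  have neS: "S \<noteq> {}" using c unfolding S_def by auto
  define m where "m = Min S"
  have mS: "m \<in> S" unfolding m_def using fS neS by (rule Min_in)
  have m1: "m \<in> {1..NN r}" using mS unfolding S_def cls_def by auto
  have lt: "j dvd n \<longleftrightarrow> j dvd n'" if "j < m" for j
  proof (cases "j = 0")
    case True then show ?thesis using n by simp
  next
    case False
    have "j \<notin> S" using that Min_le[OF fS] unfolding m_def by (meson leD)
    moreover have "j \<in> {1..NN r}" using False that m1 by auto
    ultimately show ?thesis unfolding S_def cls_def by auto
  qed
  show ?thesis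
  proof (cases "m \<in> cls r n")
    case True
    hence "m dvd n" "\<not> m dvd n'" using mS m1 unfolding S_def cls_def by auto
    from sep_dir[OF r n _ this lt] m1 dmin_le[OF m1] show ?thesis by auto
  next
    case False
    hence "m dvd n'" "\<not> m dvd n" using mS m1 unfolding S_def cls_def by auto
    from sep_dir[OF r n(2) n(1) _ this] lt m1 dmin_le[OF m1] show ?thesis by auto
  qed
qed

definition VV :: "real \<Rightarrow> nat set \<Rightarrow> real set" where
  "VV r c = sigma_neg r ` {n. n \<ge> 1 \<and> cls r n = c}"
definition WW :: "real \<Rightarrow> nat set \<Rightarrow> real set" where
  "WW r c = sigma_neg r ` {n. n \<ge> 1 \<and> cls r n \<noteq> c}"

lemma closures_disjoint:
  assumes r: "r > 1"
  shows "closure (VV r c) \<inter> closure (WW r c) = {}"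
proof (rule ccontr)
  assume "closure (VV r c) \<inter> closure (WW r c) \<noteq> {}"
  then obtain x where x: "x \<in> closure (VV r c)" "x \<in> closure (WW r c)" by blast
  have e: "dmin r / 2 > 0" using dmin_pos[OF r] by simp
  obtain a where a: "a \<in> VV r c" "dist a x < dmin r / 2"
    using x(1) e unfolding closure_approachable by blast
  obtain b where b: "b \<in> WW r c" "dist b x < dmin r / 2"
    using x(2) e unfolding closure_approachable by blast
  obtain n where n: "n \<ge> 1" "cls r n = c" "a = sigma_neg r n" using a(1) unfolding VV_def by blast
  obtain n' where n': "n' \<ge> 1" "cls r n' \<noteq> c" "b = sigma_neg r n'" using b(1) unfolding WW_def by blast
  have "cls r n \<noteq> cls r n'" using n(2) n'(2) by simp
  from sep[OF r n(1) n'(1) this] have "\<bar>a - b\<bar> \<ge> dmin r" unfolding n(3) n'(3) .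
  moreover have "\<bar>a - b\<bar> < dmin r" using a(2) b(2) unfolding dist_real_def by linarith
  ultimately show False by linarith
qed

lemma same_cls:
  assumes r: "r > 1" and C: "connected C" "C \<subseteq> sigma_closure r"
    and n: "n \<ge> 1" "n' \<ge> 1" and inC: "sigma_neg r n \<in> C" "sigma_neg r n' \<in> C"
  shows "cls r n = cls r n'"
proof (rule ccontr)
  assume ne: "cls r n \<noteq> cls r n'"
  define c where "c = cls r n"
  have "{1..} = {n. n \<ge> 1 \<and> cls r n = c} \<union> {n. n \<ge> 1 \<and> cls r n \<noteq> c}" by auto
  hence "sigma_neg r ` {1..} = VV r c \<union> WW r c" unfolding VV_def WW_def by (simp only: image_Un)
  hence U: "sigma_closure r = closure (VV r c) \<union> closure (WW r c)"
    unfolding sigma_closure_def by (simp add: closure_Un)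
  have "closure (VV r c) \<inter> C = {} \<or> closure (WW r c) \<inter> C = {}"
  proof (rule connected_closedD[OF C(1)])
    show "closure (VV r c) \<inter> closure (WW r c) \<inter> C = {}" using closures_disjoint[OF r, of c] by blast
    show "C \<subseteq> closure (VV r c) \<union> closure (WW r c)" using C(2) U by simp
  qed simp_all
  moreover have "sigma_neg r n \<in> VV r c"
    using n(1) unfolding VV_def c_def by blast
  hence "sigma_neg r n \<in> closure (VV r c)" using closure_subset by blast
  moreover have "sigma_neg r n' \<in> WW r c"
    using n(2) ne unfolding WW_def c_def by blast
  hence "sigma_neg r n' \<in> closure (WW r c)" using closure_subset by blast
  ultimately show False using inC by blast
qed

lemma cls_prod:
  assumes r: "r > 1" and T: "T \<subseteq> {p. prime p \<and> real p \<le> r - 1}" "finite T"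
    and p: "prime p" "real p \<le> r - 1"
  shows "p \<in> cls r (\<Prod>T) \<longleftrightarrow> p \<in> T"
proof -
  have p1: "p \<in> {1..NN r}" using p le_NN prime_gt_0_nat by (auto simp: Suc_le_eq)
  have "p dvd \<Prod>T \<longleftrightarrow> (\<exists>q\<in>T. p dvd q)" using prime_dvd_prod_iff[OF T(2) p(1)] by simp
  also have "\<dots> \<longleftrightarrow> p \<in> T"
  proof
    assume "\<exists>q\<in>T. p dvd q"
    then obtain q where q: "q \<in> T" "p dvd q" by blast
    have "prime q" using q(1) T(1) by auto
    hence "p = q" using primes_dvd_imp_eq[OF p(1) _ q(2)] by simp
    thus "p \<in> T" using q(1) by simp
  next
    assume "p \<in> T"
    thus "\<exists>q\<in>T. p dvd q" by (intro bexI[of _ p]) auto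
  qed
  finally show ?thesis using p1 unfolding cls_def by auto
qed

theorem mainTheorem3:
  fixes r :: real
  assumes "r > 1"
  shows "infinite (components (sigma_closure r))
         \<or> 2 ^ prime_pi (r - 1) \<le> card (components (sigma_closure r))"
proof (cases "infinite (components (sigma_closure r))")
  case True thus ?thesis by simp
next
  case False note fin = this
  define P where "P = {p::nat. prime p \<and> real p \<le> r - 1}"
  have fP: "finite P"
    by (rule finite_subset[of _ "{..NN r}"]) (auto simp: P_def intro: le_NN)
  have prod1: "\<Prod>T \<ge> (1::nat)" if "T \<subseteq> P" for T
  proof -
    have "finite T" using that fP finite_subset by blast
    moreover have "\<forall>q\<in>T. q > (0::nat)" using that unfolding P_def by (auto intro: prime_gt_0_nat)
    ultimately have "\<Prod>T > (0::nat)" by (simp add: prod_pos)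
    thus ?thesis by simp
  qed
  define \<Phi> where "\<Phi> T = connected_component_set (sigma_closure r) (sigma_neg r (\<Prod>T))" for T :: "nat set"
  have mem: "sigma_neg r (\<Prod>T) \<in> sigma_closure r" if "T \<subseteq> P" for T
    using prod1[OF that] closure_subset unfolding sigma_closure_def by fastforce
  have img: "\<Phi> ` Pow P \<subseteq> components (sigma_closure r)"
  proof
    fix X assume "X \<in> \<Phi> ` Pow P"
    then obtain T where T: "T \<subseteq> P" "X = \<Phi> T" by auto
    show "X \<in> components (sigma_closure r)"
      unfolding components_iff using mem[OF T(1)] T(2) unfolding \<Phi>_def by blast
  qed
  have inj: "inj_on \<Phi> (Pow P)"
  proof (rule inj_onI)
    fix T T' assume T: "T \<in> Pow P" and T': "T' \<in> Pow P" and eq: "\<Phi> T = \<Phi> T'"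
    have "sigma_neg r (\<Prod>T') \<in> \<Phi> T'" unfolding \<Phi>_def using mem T' by simp
    hence "sigma_neg r (\<Prod>T') \<in> \<Phi> T" using eq by simp
    moreover have "sigma_neg r (\<Prod>T) \<in> \<Phi> T" unfolding \<Phi>_def using mem T by simp
    moreover have "\<Phi> T \<subseteq> sigma_closure r" unfolding \<Phi>_def by (rule connected_component_subset)
    moreover have "connected (\<Phi> T)" unfolding \<Phi>_def by (rule connected_connected_component)
    moreover have "\<Prod>T \<ge> 1" "\<Prod>T' \<ge> 1" using prod1 T T' by auto
    ultimately have c: "cls r (\<Prod>T) = cls r (\<Prod>T')"
      using same_cls[OF assms, of "\<Phi> T" "\<Prod>T" "\<Prod>T'"] by blast
    have fT: "finite T" "finite T'" using T T' fP finite_subset by auto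
    show "T = T'"
    proof (rule set_eqI)
      fix p
      show "p \<in> T \<longleftrightarrow> p \<in> T'"
      proof (cases "p \<in> P")
        case True
        hence pp: "prime p" "real p \<le> r - 1" unfolding P_def by auto
        show ?thesis using cls_prod[OF assms _ fT(1) pp] cls_prod[OF assms _ fT(2) pp] T T' c
          unfolding P_def by auto
      next
        case False then show ?thesis using T T' by auto
      qed
    qed
  qed
  have "card (Pow P) \<le> card (components (sigma_closure r))"
    using card_inj_on_le[OF inj img] fin by simp
  hence "2 ^ prime_pi (r - 1) \<le> card (components (sigma_closure r))"
    using fP unfolding prime_pi_def P_def[symmetric] by (simp add: card_Pow)
  thus ?thesis by simp
qed

end
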